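(* Consider the linear structural equation model described in the context. Suppose that the plurality rule for the direction $X\to Y$ holds, i.e. $$|\mathcal{V}_{X\to Y}|>\max_{c\in\mathbb{R}}\Big|\Big\{j\in \mathcal{I}_{X\to Y}:\tfrac{\pi_{Y,j}}{\gamma_{X,j}}=c\Big\}\Big|,$$ and that $\mathrm{Cov}(Y_iR_{Y,i},Z_i)\neq 0$. Then $\beta_{X\to Y}$ and $\beta_{Y\to X}$ are identifiable, i.e. uniquely determined by the joint distribution of the observed variables $(X_i,Y_i,Z_i)$.
   Context: Observations $(X_i,Y_i,Z_i,U_i)$, $i=1,\dots,n$, are i.i.d.; $X_i,Y_i\in\mathbb{R}$ are observed primary variables with finite variance, $Z_i\in\mathbb{R}^p$ is an observed vector of candidate instruments, $U_i$ is unobserved. Assume $E(X_i)=E(Y_i)=0$, $E(Z_i)=0$, and $\Sigma=E(Z_iZ_i^{T})$ is invertible. The data satisfy $$Y_i=\beta_{X\to Y}X_i+\pi_Y^{T}Z_i+\xi_Y(U_i)+\zeta_i,\qquad X_i=\beta_{Y\to X}Y_i+\pi_X^{T}Z_i+\xi_X(U_i)+\eta_i,$$ where $\pi_X,\pi_Y\in\mathbb{R}^p$, $\xi_Y,\xi_X$ are arbitrary functions with $E\xi_Y(U_i)=E\xi_X(U_i)=0$, $Z_i$ is independent of $U_i$, and $E(\zeta_i\mid\eta_i,Z_i,U_i)=E(\eta_i\mid\zeta_i,Z_i,U_i)=0$. The matrix $B=\begin{pmatrix}0&\beta_{X\to Y}\\ \beta_{Y\to X}&0\end{pmatrix}$ has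 spectral norm strictly less than one (so $\beta_{X\to Y}\beta_{Y\to X}\neq1$), and $(Y_i,X_i)^T=(I-B)^{-1}\{(\pi_Y^TZ_i,\pi_X^TZ_i)^T+R_i\}$ with disturbances $R_i=(R_{Y,i},R_{X,i})^T$, $R_{Y,i}=\xi_Y(U_i)+\zeta_i$, $R_{X,i}=\xi_X(U_i)+\eta_i$. Then $E(Y_i\mid Z_i)=\gamma_Y^TZ_i$, $E(X_i\mid Z_i)=\gamma_X^TZ_i$ with $\gamma_Y=(\pi_Y+\beta_{X\to Y}\pi_X)/(1-\beta_{X\to Y}\beta_{Y\to X})$ and $\gamma_X=(\pi_X+\beta_{Y\to X}\pi_Y)/(1-\beta_{X\to Y}\beta_{Y\to X})$. Define $\mathcal{V}_{X\to Y}=\{j:\pi_{X,j}\neq0,\pi_{Y,j}=0\}$ and $\mathcal{I}_{X\to Y}=\{j:\gamma_{X,j}\neq 0,\pi_{Y,j}\neq0\}$. The maximum over an empty collection of sets is taken as $0$. *)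

theory Defs
  imports "HOL-Analysis.Analysis" "HOL-Probability.Probability"
begin

definition cov :: "'a measure \<Rightarrow> ('a \<Rightarrow> real) \<Rightarrow> ('a \<Rightarrow> real) \<Rightarrow> real" where
  "cov M f g = (\<integral>x. f x * g x \<partial>M) - (\<integral>x. f x \<partial>M) * (\<integral>x. g x \<partial>M)"

definition cov_vec :: "'a measure \<Rightarrow> ('a \<Rightarrow> real) \<Rightarrow> ('a \<Rightarrow> real^'p) \<Rightarrow> real^'p" where
  "cov_vec M w Z = (\<chi> j. cov M w (\<lambda>x. Z x $ j))"

definition second_moment :: "'a measure \<Rightarrow> ('a \<Rightarrow> real^'p) \<Rightarrow> real^'p^'p" where
  "second_moment M Z = (\<chi> j k. \<integral>x. Z x $ j * Z x $ k \<partial>M)"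

definition Bmat :: "real \<Rightarrow> real \<Rightarrow> real^2^2" where
  "Bmat bXY bYX = vector [vector [0, bXY], vector [bYX, 0]]"

definition spec_norm :: "real^'n^'m \<Rightarrow> real" where
  "spec_norm A = onorm (\<lambda>v. A *v v)"

definition gammaY :: "real \<Rightarrow> real \<Rightarrow> real^'p \<Rightarrow> real^'p \<Rightarrow> real^'p" where
  "gammaY bXY bYX piY piX = (1 / (1 - bXY * bYX)) *\<^sub>R (piY + bXY *\<^sub>R piX)"

definition gammaX :: "real \<Rightarrow> real \<Rightarrow> real^'p \<Rightarrow> real^'p \<Rightarrow> real^'p" where
  "gammaX bXY bYX piY piX = (1 / (1 - bXY * bYX)) *\<^sub>R (piX + bYX *\<^sub>R piY)"

definition validXY :: "real^'p \<Rightarrow> real^'p \<Rightarrow> 'p set" where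
  "validXY piY piX = {j. piX $ j \<noteq> 0 \<and> piY $ j = 0}"

definition invalidXY :: "real \<Rightarrow> real \<Rightarrow> real^'p \<Rightarrow> real^'p \<Rightarrow> 'p set" where
  "invalidXY bXY bYX piY piX = {j. gammaX bXY bYX piY piX $ j \<noteq> 0 \<and> piY $ j \<noteq> 0}"

text \<open>Plurality rule for X->Y:
  |V| > max_c |{j in I. piY_j / gammaX_j = c}|.  (The maximum is over the finite,
  nonempty set of attained values; it equals 0 when I is empty.)\<close>
definition plurality_XY :: "real \<Rightarrow> real \<Rightarrow> real^'p \<Rightarrow> real^'p \<Rightarrow> bool" where
  "plurality_XY bXY bYX piY piX \<longleftrightarrow>
     card (validXY piY piX) >
     Max ((\<lambda>c. card {j \<in> invalidXY bXY bYX piY piX.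
                        piY $ j / gammaX bXY bYX piY piX $ j = c}) ` UNIV)"

text \<open>The linear structural equation model of the context, for one data-generating
  mechanism: probability space M, observed X, Y, Z, unobserved U (valued in the
  measurable space MU), confounding functions xiY, xiX, errors zeta, eta and
  parameters bXY = beta_{X->Y}, bYX = beta_{Y->X}, piY, piX.\<close>
definition lin_sem ::
  "'a measure \<Rightarrow> ('a \<Rightarrow> real) \<Rightarrow> ('a \<Rightarrow> real) \<Rightarrow> ('a \<Rightarrow> real^'p) \<Rightarrow>
   ('a \<Rightarrow> 'u) \<Rightarrow> 'u measure \<Rightarrow> ('u \<Rightarrow> real) \<Rightarrow> ('u \<Rightarrow> real) \<Rightarrow>
   ('a \<Rightarrow> real) \<Rightarrow> ('a \<Rightarrow> real) \<Rightarrow> real \<Rightarrow> real \<Rightarrow> real^'p \<Rightarrow> real^'p \<Rightarrow> bool" where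
  "lin_sem M X Y Z U MU xiY xiX zeta eta bXY bYX piY piX \<longleftrightarrow>
     prob_space M \<and>
     X \<in> borel_measurable M \<and> Y \<in> borel_measurable M \<and> Z \<in> borel_measurable M \<and>
     U \<in> measurable M MU \<and> zeta \<in> borel_measurable M \<and> eta \<in> borel_measurable M \<and>
     xiY \<in> borel_measurable MU \<and> xiX \<in> borel_measurable MU \<and>
     \<comment> \<open>finite variance of X, Y and mean zero\<close>
     integrable M (\<lambda>x. (X x)\<^sup>2) \<and> integrable M (\<lambda>x. (Y x)\<^sup>2) \<and>
     (\<integral>x. X x \<partial>M) = 0 \<and> (\<integral>x. Y x \<partial>M) = 0 \<and>
     \<comment> \<open>E Z = 0 and Sigma = E(Z Z^T) exists and is invertible\<close>
     (\<forall>j. integrable M (\<lambda>x. (Z x $ j)\<^sup>2) \<and> (\<integral>x. Z x $ j \<partial>M) = 0) \<and>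
     invertible (second_moment M Z) \<and>
     \<comment> \<open>structural equations\<close>
     (\<forall>x\<in>space M. Y x = bXY * X x + piY \<bullet> Z x + xiY (U x) + zeta x) \<and>
     (\<forall>x\<in>space M. X x = bYX * Y x + piX \<bullet> Z x + xiX (U x) + eta x) \<and>
     \<comment> \<open>E xi(U) = 0\<close>
     integrable M (\<lambda>x. xiY (U x)) \<and> (\<integral>x. xiY (U x) \<partial>M) = 0 \<and>
     integrable M (\<lambda>x. xiX (U x)) \<and> (\<integral>x. xiX (U x) \<partial>M) = 0 \<and>
     \<comment> \<open>Z independent of U\<close>
     prob_space.indep_set M {Z -` A \<inter> space M | A. A \<in> sets borel}
                          {U -` A \<inter> space M | A. A \<in> sets MU} \<and>
     \<comment> \<open>E(zeta | eta, Z, U) = 0 and E(eta | zeta, Z, U) = 0\<close>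
     integrable M zeta \<and> integrable M eta \<and>
     (AE x in M. real_cond_exp M
         (vimage_algebra (space M) (\<lambda>x. (eta x, Z x, U x)) (borel \<Otimes>\<^sub>M (borel \<Otimes>\<^sub>M MU)))
         zeta x = 0) \<and>
     (AE x in M. real_cond_exp M
         (vimage_algebra (space M) (\<lambda>x. (zeta x, Z x, U x)) (borel \<Otimes>\<^sub>M (borel \<Otimes>\<^sub>M MU)))
         eta x = 0) \<and>
     \<comment> \<open>spectral norm of B strictly less than one\<close>
     spec_norm (Bmat bXY bYX) < 1"

definition RY :: "('a \<Rightarrow> 'u) \<Rightarrow> ('u \<Rightarrow> real) \<Rightarrow> ('a \<Rightarrow> real) \<Rightarrow> 'a \<Rightarrow> real" where
  "RY U xiY zeta = (\<lambda>x. xiY (U x) + zeta x)"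

end

theory Submission
  imports Defs
begin

lemma spec_bound:
  assumes "spec_norm (Bmat a b) < 1"
  shows "\<bar>a\<bar> < 1" "\<bar>b\<bar> < 1" "1 - a * b > 0"
proof -
  have "\<bar>Bmat a b $ 1 $ 2\<bar> \<le> spec_norm (Bmat a b)"
    unfolding spec_norm_def using matrix_component_le_onorm[of "Bmat a b" 1 2]
    by simp
  then show A: "\<bar>a\<bar> < 1" using assms by (simp add: Bmat_def)
  have "\<bar>Bmat a b $ 2 $ 1\<bar> \<le> spec_norm (Bmat a b)"
    unfolding spec_norm_def using matrix_component_le_onorm[of "Bmat a b" 2 1]
    by simp
  then show B: "\<bar>b\<bar> < 1" using assms by (simp add: Bmat_def)
  have "\<bar>a\<bar> * \<bar>b\<bar> \<le> \<bar>a\<bar>" using B by (simp add: mult_left_le)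
  then have "\<bar>a * b\<bar> < 1" using A by (simp add: abs_mult)
  then show "1 - a * b > 0" by auto
qed

lemma inv_injective:
  fixes A :: "real^'n^'n"
  assumes "invertible A" "A *v x = A *v y"
  shows "x = y"
proof -
  from assms(1) obtain B where "B ** A = mat 1" unfolding invertible_def by blast
  then have "inj ((*v) A)" using matrix_left_invertible_injective by blast
  then show ?thesis using assms(2) by (meson injD)
qed

lemma vnth_meas[measurable]: "(\<lambda>x::real^'p. x $ j) \<in> borel_measurable borel"
  by (rule borel_measurable_continuous_onI[OF linear_continuous_on[OF bounded_linear_vec_nth]])


definition clamp :: "nat \<Rightarrow> real \<Rightarrow> real" where
  "clamp n t = max (- real n) (min (real n) t)"

lemma clamp_abs: "\<bar>clamp n t\<bar> = min (real n) \<bar>t\<bar>"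
  unfolding clamp_def by auto

lemma clamp_le: "\<bar>clamp n t\<bar> \<le> real n" "\<bar>clamp n t\<bar> \<le> \<bar>t\<bar>"
  unfolding clamp_abs by auto

lemma clamp_sq: "(clamp n t)\<^sup>2 \<le> clamp n t * t"
proof (cases "t \<ge> 0")
  case True
  then have "0 \<le> clamp n t" "clamp n t \<le> t" by (auto simp: clamp_def)
  then show ?thesis by (simp add: power2_eq_square mult_left_mono)
next
  case False
  then have "clamp n t \<le> 0" "t \<le> clamp n t" by (auto simp: clamp_def)
  then show ?thesis by (simp add: power2_eq_square mult_left_mono_neg)
qed

lemma clamp_lim: "(\<lambda>n. clamp n t) \<longlonglongrightarrow> t"
proof (rule tendsto_eventually)
  obtain N where "\<bar>t\<bar> \<le> real N" using real_arch_simple by blast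
  then show "\<forall>\<^sub>F n in sequentially. clamp n t = t"
    unfolding eventually_sequentially clamp_def
    by (intro exI[of _ N]) auto
qed

lemma clamp_sq_mono: "m \<le> n \<Longrightarrow> (clamp m t)\<^sup>2 \<le> (clamp n t)\<^sup>2"
proof -
  assume "m \<le> n"
  then have "\<bar>clamp m t\<bar> \<le> \<bar>clamp n t\<bar>" unfolding clamp_abs by auto
  then show ?thesis by (simp add: abs_le_square_iff)
qed

lemma clamp_meas0: "clamp n \<in> borel_measurable borel"
  by (rule borel_measurable_continuous_onI) (unfold clamp_def, intro continuous_intros)

lemma clamp_meas[measurable]: "f \<in> borel_measurable M \<Longrightarrow> (\<lambda>x. clamp n (f x)) \<in> borel_measurable M"
  using measurable_compose[OF _ clamp_meas0] by blast

lemma abs_mult_le_sq: "\<bar>a * b\<bar> \<le> a\<^sup>2 + (b::real)\<^sup>2"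
proof -
  have "0 \<le> (\<bar>a\<bar> - \<bar>b\<bar>)\<^sup>2" by simp
  then have "2 * (\<bar>a\<bar> * \<bar>b\<bar>) \<le> a\<^sup>2 + b\<^sup>2" by (simp add: power2_diff)
  moreover have "0 \<le> \<bar>a\<bar> * \<bar>b\<bar>" by simp
  ultimately have "\<bar>a\<bar> * \<bar>b\<bar> \<le> a\<^sup>2 + b\<^sup>2" by linarith
  then show ?thesis by (simp add: abs_mult)
qed

lemma int_prod_L2:
  fixes f g :: "'a \<Rightarrow> real"
  assumes [measurable]: "f \<in> borel_measurable M" "g \<in> borel_measurable M"
    and "integrable M (\<lambda>x. (f x)\<^sup>2)" "integrable M (\<lambda>x. (g x)\<^sup>2)"
  shows "integrable M (\<lambda>x. f x * g x)"
proof -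
  have i: "integrable M (\<lambda>x. (f x)\<^sup>2 + (g x)\<^sup>2)" using assms by auto
  show ?thesis
    by (rule Bochner_Integration.integrable_bound[OF i]) (use assms abs_mult_le_sq in auto)
qed

lemma int_bounded_mult:
  fixes f g :: "'a \<Rightarrow> real"
  assumes [measurable]: "f \<in> borel_measurable M" "g \<in> borel_measurable M"
    and "integrable M g" "\<And>x. \<bar>f x\<bar> \<le> B"
  shows "integrable M (\<lambda>x. f x * g x)"
proof -
  have i: "integrable M (\<lambda>x. B * g x)" using assms by auto
  have "AE x in M. norm (f x * g x) \<le> norm (B * g x)"
  proof (rule AE_I2)
    fix x have "\<bar>f x\<bar> * \<bar>g x\<bar> \<le> B * \<bar>g x\<bar>" using assms(4) by (simp add: mult_right_mono)
    moreover have "0 \<le> B" using assms(4)[of x] by linarith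
    ultimately show "norm (f x * g x) \<le> norm (B * g x)" by (simp add: abs_mult)
  qed
  then show ?thesis by (intro Bochner_Integration.integrable_bound[OF i]) auto
qed

lemma (in finite_measure) L2_L1:
  fixes f :: "'a \<Rightarrow> real"
  assumes [measurable]: "f \<in> borel_measurable M" and "integrable M (\<lambda>x. (f x)\<^sup>2)"
  shows "integrable M f"
proof -
  have i: "integrable M (\<lambda>x. 1 + (f x)\<^sup>2)" using assms by auto
  have "AE x in M. norm (f x) \<le> norm (1 + (f x)\<^sup>2)"
  proof (rule AE_I2)
    fix x
    show "norm (f x) \<le> norm (1 + (f x)\<^sup>2)"
    proof (cases "\<bar>f x\<bar> \<le> 1")
      case True
      moreover have "0 \<le> (f x)\<^sup>2" by simp
      ultimately have "\<bar>f x\<bar> \<le> 1 + (f x)\<^sup>2" by linarith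
      then show ?thesis by simp
    next
      case False
      then have "\<bar>f x\<bar> * 1 \<le> \<bar>f x\<bar> * \<bar>f x\<bar>" by (intro mult_left_mono) auto
      then show ?thesis by (simp add: power2_eq_square abs_mult_self)
    qed
  qed
  then show ?thesis by (intro Bochner_Integration.integrable_bound[OF i]) auto
qed

lemma L2_add:
  fixes f g :: "'a \<Rightarrow> real"
  assumes [measurable]: "f \<in> borel_measurable M" "g \<in> borel_measurable M"
    and "integrable M (\<lambda>x. (f x)\<^sup>2)" "integrable M (\<lambda>x. (g x)\<^sup>2)"
  shows "integrable M (\<lambda>x. (f x + g x)\<^sup>2)"
proof -
  have i: "integrable M (\<lambda>x. (f x)\<^sup>2 + 2 * (f x * g x) + (g x)\<^sup>2)"
    using int_prod_L2[OF assms] assms by auto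
  have eq: "(\<lambda>x. (f x + g x)\<^sup>2) = (\<lambda>x. (f x)\<^sup>2 + 2 * (f x * g x) + (g x)\<^sup>2)"
    by (simp add: power2_sum fun_eq_iff)
  show ?thesis unfolding eq by (rule i)
qed

lemma L2_scale:
  fixes f :: "'a \<Rightarrow> real"
  assumes "integrable M (\<lambda>x. (f x)\<^sup>2)"
  shows "integrable M (\<lambda>x. (c * f x)\<^sup>2)"
  using assms by (simp add: power_mult_distrib)

lemma L2_sum:
  fixes f :: "'i \<Rightarrow> 'a \<Rightarrow> real"
  assumes "finite S" "\<And>i. i \<in> S \<Longrightarrow> f i \<in> borel_measurable M"
    "\<And>i. i \<in> S \<Longrightarrow> integrable M (\<lambda>x. (f i x)\<^sup>2)"
  shows "integrable M (\<lambda>x. (\<Sum>i\<in>S. f i x)\<^sup>2)"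
  using assms
proof (induction S rule: finite_induct)
  case empty then show ?case by simp
next
  case (insert a S)
  have m: "(\<lambda>x. \<Sum>i\<in>S. f i x) \<in> borel_measurable M"
    using insert by (intro borel_measurable_sum) auto
  have "integrable M (\<lambda>x. (f a x + (\<Sum>i\<in>S. f i x))\<^sup>2)"
    by (rule L2_add) (use insert m in auto)
  then show ?case using insert by simp
qed


lemma (in prob_space) L2_from_orth:
  fixes xi e R :: "'a \<Rightarrow> real"
  assumes [measurable]: "xi \<in> borel_measurable M" "e \<in> borel_measurable M" "R \<in> borel_measurable M"
    and iR: "integrable M (\<lambda>x. (R x)\<^sup>2)" and ixi: "integrable M xi" and ie: "integrable M e"
    and eqR: "\<And>x. x \<in> space M \<Longrightarrow> R x = xi x + e x"
    and orth: "\<And>n. (\<integral>x. clamp n (xi x) * e x \<partial>M) = 0"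
  shows "integrable M (\<lambda>x. (xi x)\<^sup>2)"
proof -
  define c where "c n x = clamp n (xi x)" for n x
  have cm[measurable]: "c n \<in> borel_measurable M" for n unfolding c_def by measurable
  have cb: "\<bar>c n x\<bar> \<le> real n" for n x unfolding c_def by (rule clamp_le)
  have ic2: "integrable M (\<lambda>x. (c n x)\<^sup>2)" for n
  proof (rule integrable_const_bound[where B="real n * real n"])
    show "AE x in M. norm ((c n x)\<^sup>2) \<le> real n * real n"
    proof (rule AE_I2)
      fix x have "\<bar>c n x\<bar> * \<bar>c n x\<bar> \<le> real n * real n" using cb[of n x] by (intro mult_mono) auto
      then show "norm ((c n x)\<^sup>2) \<le> real n * real n" by (simp add: power2_eq_square abs_mult)
    qed
  qed measurable
  have icxi: "integrable M (\<lambda>x. c n x * xi x)" for n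
    by (rule int_bounded_mult[OF _ _ ixi cb]) auto
  have ice: "integrable M (\<lambda>x. c n x * e x)" for n
    by (rule int_bounded_mult[OF _ _ ie cb]) auto
  have icR: "integrable M (\<lambda>x. c n x * R x)" for n
    by (rule int_prod_L2[OF _ _ ic2 iR]; measurable)
  have bound: "(\<integral>x. (c n x)\<^sup>2 \<partial>M) \<le> (\<integral>x. (R x)\<^sup>2 \<partial>M)" for n
  proof -
    have "(\<integral>x. (c n x)\<^sup>2 \<partial>M) \<le> (\<integral>x. c n x * xi x \<partial>M)"
      by (rule integral_mono[OF ic2 icxi]) (simp add: c_def clamp_sq)
    also have "\<dots> = (\<integral>x. c n x * xi x \<partial>M) + (\<integral>x. c n x * e x \<partial>M)"
      using orth[of n] by (simp add: c_def)
    also have "\<dots> = (\<integral>x. c n x * xi x + c n x * e x \<partial>M)"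
      using icxi ice by simp
    also have "\<dots> = (\<integral>x. c n x * R x \<partial>M)"
      by (rule Bochner_Integration.integral_cong) (auto simp: eqR distrib_left)
    also have "\<dots> \<le> (\<integral>x. ((c n x)\<^sup>2 + (R x)\<^sup>2) / 2 \<partial>M)"
    proof (rule integral_mono[OF icR])
      show "integrable M (\<lambda>x. ((c n x)\<^sup>2 + (R x)\<^sup>2) / 2)" using ic2 iR by auto
      fix x
      have "0 \<le> (c n x - R x)\<^sup>2" by simp
      then show "c n x * R x \<le> ((c n x)\<^sup>2 + (R x)\<^sup>2) / 2" by (simp add: power2_diff)
    qed
    also have "\<dots> = ((\<integral>x. (c n x)\<^sup>2 \<partial>M) + (\<integral>x. (R x)\<^sup>2 \<partial>M)) / 2"
      using ic2 iR by simp
    finally have "(\<integral>x. (c n x)\<^sup>2 \<partial>M) \<le> ((\<integral>x. (c n x)\<^sup>2 \<partial>M) + (\<integral>x. (R x)\<^sup>2 \<partial>M)) / 2" .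
    then show ?thesis by (simp add: field_simps)
  qed
  have mono_int: "incseq (\<lambda>n. \<integral>x. (c n x)\<^sup>2 \<partial>M)"
    by (rule incseq_SucI, rule integral_mono[OF ic2 ic2]) (simp add: c_def clamp_sq_mono)
  obtain L where L: "(\<lambda>n. \<integral>x. (c n x)\<^sup>2 \<partial>M) \<longlonglongrightarrow> L"
    using incseq_convergent[OF mono_int, of "\<integral>x. (R x)\<^sup>2 \<partial>M"] bound by blast
  show ?thesis
  proof (rule integral_monotone_convergence_nonneg(1)[OF ic2 _ _ _ L])
    show "AE x in M. mono (\<lambda>n. (c n x)\<^sup>2)"
      by (rule AE_I2) (auto simp: mono_def c_def clamp_sq_mono)
    show "AE x in M. 0 \<le> (c n x)\<^sup>2" for n by simp
    show "AE x in M. (\<lambda>n. (c n x)\<^sup>2) \<longlonglongrightarrow> (xi x)\<^sup>2"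
      by (rule AE_I2) (unfold c_def, intro tendsto_power clamp_lim)
  qed measurable
qed


lemma lin_solve:
  fixes a b p q u v :: real
  assumes "a = v * b + p" "b = u * a + q" "1 - u * v \<noteq> 0"
  shows "(p + v * q) / (1 - u * v) = a" "(q + u * p) / (1 - u * v) = b"
proof -
  have p: "p = a - v * b" and q: "q = b - u * a" using assms(1,2) by linarith+
  have "p + v * q = a * (1 - u * v)" unfolding p q by (simp add: algebra_simps)
  then show "(p + v * q) / (1 - u * v) = a" using assms(3) by simp
  have "q + u * p = b * (1 - u * v)" unfolding p q by (simp add: algebra_simps)
  then show "(q + u * p) / (1 - u * v) = b" using assms(3) by simp
qed

locale lsem =
  fixes M :: "'a measure" and X Y :: "'a \<Rightarrow> real" and Z :: "'a \<Rightarrow> real^'p"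
    and U :: "'a \<Rightarrow> 'u" and MU :: "'u measure" and xiY xiX :: "'u \<Rightarrow> real"
    and zeta eta :: "'a \<Rightarrow> real" and bXY bYX :: real and piY piX :: "real^'p"
  assumes model: "lin_sem M X Y Z U MU xiY xiX zeta eta bXY bYX piY piX"
begin

lemma ps: "prob_space M" using model unfolding lin_sem_def by blast

sublocale prob_space M by (rule ps)

lemma meas[measurable]:
  "X \<in> borel_measurable M" "Y \<in> borel_measurable M" "Z \<in> borel_measurable M"
  "U \<in> measurable M MU" "zeta \<in> borel_measurable M" "eta \<in> borel_measurable M"
  "xiY \<in> borel_measurable MU" "xiX \<in> borel_measurable MU"
  using model unfolding lin_sem_def by blast+

lemma measZ[measurable]: "(\<lambda>x. Z x $ j) \<in> borel_measurable M"
  by measurable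

lemma ints:
  "integrable M (\<lambda>x. (X x)\<^sup>2)" "integrable M (\<lambda>x. (Y x)\<^sup>2)"
  "integrable M (\<lambda>x. (Z x $ j)\<^sup>2)" "(\<integral>x. Z x $ j \<partial>M) = 0"
  "integrable M (\<lambda>x. xiY (U x))" "(\<integral>x. xiY (U x) \<partial>M) = 0"
  "integrable M (\<lambda>x. xiX (U x))" "(\<integral>x. xiX (U x) \<partial>M) = 0"
  "integrable M zeta" "integrable M eta"
  "invertible (second_moment M Z)"
  using model unfolding lin_sem_def by blast+

lemma eqs:
  "x \<in> space M \<Longrightarrow> Y x = bXY * X x + piY \<bullet> Z x + xiY (U x) + zeta x"
  "x \<in> space M \<Longrightarrow> X x = bYX * Y x + piX \<bullet> Z x + xiX (U x) + eta x"
  using model unfolding lin_sem_def by blast+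

lemma specs: "\<bar>bXY\<bar> < 1" "\<bar>bYX\<bar> < 1" "1 - bXY * bYX > 0"
  using spec_bound[of bXY bYX] model unfolding lin_sem_def by blast+

lemma indepZU:
  fixes phi :: "real^'p \<Rightarrow> real" and psi :: "'u \<Rightarrow> real"
  assumes [measurable]: "phi \<in> borel_measurable borel" "psi \<in> borel_measurable MU"
  shows "indep_var borel (\<lambda>x. phi (Z x) :: real) borel (\<lambda>x. psi (U x) :: real)"
proof -
  have ind: "indep_set {Z -` A \<inter> space M | A. A \<in> sets borel} {U -` A \<inter> space M | A. A \<in> sets MU}"
    using model unfolding lin_sem_def by blast
  have st: "Int_stable {V -` A \<inter> space M | A. A \<in> sets N}" for V :: "'a \<Rightarrow> 'c" and N
  proof (rule Int_stableI)
    fix a b assume "a \<in> {V -` A \<inter> space M | A. A \<in> sets N}" "b \<in> {V -` A \<inter> space M | A. A \<in> sets N}"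
    then obtain A B where "a = V -` A \<inter> space M" "A \<in> sets N" "b = V -` B \<inter> space M" "B \<in> sets N" by blast
    then show "a \<inter> b \<in> {V -` A \<inter> space M | A. A \<in> sets N}"
      by (intro CollectI exI[of _ "A \<inter> B"]) auto
  qed
  have ind2: "indep_set (sigma_sets (space M) {Z -` A \<inter> space M | A. A \<in> sets borel})
     (sigma_sets (space M) {U -` A \<inter> space M | A. A \<in> sets MU})"
    using indep_set_sigma_sets[OF ind st st] by simp
  have s1: "sigma_sets (space M) {(\<lambda>x. phi (Z x)) -` A \<inter> space M | A. A \<in> sets borel}
     \<subseteq> sigma_sets (space M) {Z -` A \<inter> space M | A. A \<in> sets borel}"
  proof (rule sigma_sets_mono')
    show "{(\<lambda>x. phi (Z x)) -` A \<inter> space M | A. A \<in> sets borel} \<subseteq> {Z -` A \<inter> space M | A. A \<in> sets borel}"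
    proof safe
      fix A :: "real set" assume "A \<in> sets borel"
      then have "phi -` A \<in> sets borel" using measurable_sets_borel[OF assms(1)] by auto
      moreover have "(\<lambda>x. phi (Z x)) -` A \<inter> space M = Z -` (phi -` A) \<inter> space M" by auto
      ultimately show "\<exists>B. (\<lambda>x. phi (Z x)) -` A \<inter> space M = Z -` B \<inter> space M \<and> B \<in> sets borel" by blast
    qed
  qed
  have s2: "sigma_sets (space M) {(\<lambda>x. psi (U x)) -` A \<inter> space M | A. A \<in> sets borel}
     \<subseteq> sigma_sets (space M) {U -` A \<inter> space M | A. A \<in> sets MU}"
  proof (rule sigma_sets_mono')
    show "{(\<lambda>x. psi (U x)) -` A \<inter> space M | A. A \<in> sets borel} \<subseteq> {U -` A \<inter> space M | A. A \<in> sets MU}"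
    proof safe
      fix A :: "real set" assume "A \<in> sets borel"
      then have "psi -` A \<inter> space MU \<in> sets MU" using assms(2) by (simp add: measurable_sets)
      moreover have "(\<lambda>x. psi (U x)) -` A \<inter> space M = U -` (psi -` A \<inter> space MU) \<inter> space M"
        using measurable_space[OF meas(4)] by auto
      ultimately show "\<exists>B. (\<lambda>x. psi (U x)) -` A \<inter> space M = U -` B \<inter> space M \<and> B \<in> sets MU" by blast
    qed
  qed
  have r1: "random_variable borel (\<lambda>x. phi (Z x))" by measurable
  have r2: "random_variable borel (\<lambda>x. psi (U x))" by measurable
  show ?thesis unfolding indep_var_eq indep_set_def
  proof (intro conjI r1 r2)
    show "indep_sets (case_bool (sigma_sets (space M) {(\<lambda>x. phi (Z x)) -` A \<inter> space M |A. A \<in> sets borel})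
        (sigma_sets (space M) {(\<lambda>x. psi (U x)) -` A \<inter> space M |A. A \<in> sets borel})) UNIV"
      by (rule indep_sets_mono_sets[OF ind2[unfolded indep_set_def]]) (use s1 s2 in \<open>auto split: bool.split\<close>)
  qed
qed

lemma indep_int:
  fixes phi :: "real^'p \<Rightarrow> real" and psi :: "'u \<Rightarrow> real"
  assumes [measurable]: "phi \<in> borel_measurable borel" "psi \<in> borel_measurable MU"
    and "integrable M (\<lambda>x. phi (Z x))" "integrable M (\<lambda>x. psi (U x))"
  shows "integrable M (\<lambda>x. phi (Z x) * psi (U x))"
    "(\<integral>x. phi (Z x) * psi (U x) \<partial>M) = (\<integral>x. phi (Z x) \<partial>M) * (\<integral>x. psi (U x) \<partial>M)"
  using indep_var_integrable[OF indepZU[OF assms(1,2)] assms(3,4)]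
    indep_var_lebesgue_integral[OF indepZU[OF assms(1,2)] assms(3,4)] by auto

lemma ce_zeta:
  assumes [measurable]: "phi \<in> borel_measurable (borel \<Otimes>\<^sub>M (borel \<Otimes>\<^sub>M MU))"
    and int: "integrable M (\<lambda>x. phi (eta x, Z x, U x) * zeta x)"
  shows "(\<integral>x. phi (eta x, Z x, U x) * zeta x \<partial>M) = 0"
proof -
  let ?F = "vimage_algebra (space M) (\<lambda>x. (eta x, Z x, U x)) (borel \<Otimes>\<^sub>M (borel \<Otimes>\<^sub>M MU))"
  have fm: "(\<lambda>x. (eta x, Z x, U x)) \<in> measurable M (borel \<Otimes>\<^sub>M (borel \<Otimes>\<^sub>M MU))" by measurable
  have fs: "(\<lambda>x. (eta x, Z x, U x)) \<in> space M \<rightarrow> space (borel \<Otimes>\<^sub>M (borel \<Otimes>\<^sub>M MU))"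
    using measurable_space[OF meas(4)] by (auto simp: space_pair_measure)
  have sub: "subalgebra M ?F"
    unfolding subalgebra_def using sets_vimage_algebra2[OF fs] measurable_sets[OF fm] by auto
  interpret fms: finite_measure_subalgebra M ?F
    by unfold_locales (rule sub)
  have m: "(\<lambda>x. phi (eta x, Z x, U x)) \<in> borel_measurable ?F"
    by (rule measurable_compose[OF measurable_vimage_algebra1[OF fs] assms(1)])
  have "(\<integral>x. phi (eta x, Z x, U x) * zeta x \<partial>M) = (\<integral>x. phi (eta x, Z x, U x) * real_cond_exp M ?F zeta x \<partial>M)"
    using fms.real_cond_exp_intg(2)[OF int m] by simp
  also have "\<dots> = 0"
  proof (rule integral_eq_zero_AE)
    have ae: "AE x in M. real_cond_exp M ?F zeta x = 0"
      using model unfolding lin_sem_def by blast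
    then show "AE x in M. phi (eta x, Z x, U x) * real_cond_exp M ?F zeta x = 0"
      by eventually_elim simp
  qed
  finally show ?thesis by simp
qed


lemma ce_eta:
  assumes [measurable]: "phi \<in> borel_measurable (borel \<Otimes>\<^sub>M (borel \<Otimes>\<^sub>M MU))"
    and int: "integrable M (\<lambda>x. phi (zeta x, Z x, U x) * eta x)"
  shows "(\<integral>x. phi (zeta x, Z x, U x) * eta x \<partial>M) = 0"
proof -
  let ?F = "vimage_algebra (space M) (\<lambda>x. (zeta x, Z x, U x)) (borel \<Otimes>\<^sub>M (borel \<Otimes>\<^sub>M MU))"
  have fm: "(\<lambda>x. (zeta x, Z x, U x)) \<in> measurable M (borel \<Otimes>\<^sub>M (borel \<Otimes>\<^sub>M MU))" by measurable
  have fs: "(\<lambda>x. (zeta x, Z x, U x)) \<in> space M \<rightarrow> space (borel \<Otimes>\<^sub>M (borel \<Otimes>\<^sub>M MU))"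
    using measurable_space[OF meas(4)] by (auto simp: space_pair_measure)
  have sub: "subalgebra M ?F"
    unfolding subalgebra_def using sets_vimage_algebra2[OF fs] measurable_sets[OF fm] by auto
  interpret fms: finite_measure_subalgebra M ?F
    by unfold_locales (rule sub)
  have m: "(\<lambda>x. phi (zeta x, Z x, U x)) \<in> borel_measurable ?F"
    by (rule measurable_compose[OF measurable_vimage_algebra1[OF fs] assms(1)])
  have "(\<integral>x. phi (zeta x, Z x, U x) * eta x \<partial>M) = (\<integral>x. phi (zeta x, Z x, U x) * real_cond_exp M ?F eta x \<partial>M)"
    using fms.real_cond_exp_intg(2)[OF int m] by simp
  also have "\<dots> = 0"
  proof (rule integral_eq_zero_AE)
    have ae: "AE x in M. real_cond_exp M ?F eta x = 0"
      using model unfolding lin_sem_def by blast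
    then show "AE x in M. phi (zeta x, Z x, U x) * real_cond_exp M ?F eta x = 0"
      by eventually_elim simp
  qed
  finally show ?thesis by simp
qed


lemma ce_zeta':
  assumes m: "phi \<in> borel_measurable (borel \<Otimes>\<^sub>M (borel \<Otimes>\<^sub>M MU))"
    and h: "\<And>x. x \<in> space M \<Longrightarrow> h x = phi (eta x, Z x, U x)"
    and int: "integrable M (\<lambda>x. h x * zeta x)"
  shows "(\<integral>x. h x * zeta x \<partial>M) = 0"
proof -
  have "integrable M (\<lambda>x. phi (eta x, Z x, U x) * zeta x) = integrable M (\<lambda>x. h x * zeta x)"
    by (rule Bochner_Integration.integrable_cong) (simp_all add: h)
  then have i: "integrable M (\<lambda>x. phi (eta x, Z x, U x) * zeta x)" using int by simp
  have "(\<integral>x. h x * zeta x \<partial>M) = (\<integral>x. phi (eta x, Z x, U x) * zeta x \<partial>M)"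
    by (rule Bochner_Integration.integral_cong) (simp_all add: h)
  also have "\<dots> = 0" by (rule ce_zeta[OF m i])
  finally show ?thesis .
qed

lemma ce_eta':
  assumes m: "phi \<in> borel_measurable (borel \<Otimes>\<^sub>M (borel \<Otimes>\<^sub>M MU))"
    and h: "\<And>x. x \<in> space M \<Longrightarrow> h x = phi (zeta x, Z x, U x)"
    and int: "integrable M (\<lambda>x. h x * eta x)"
  shows "(\<integral>x. h x * eta x \<partial>M) = 0"
proof -
  have "integrable M (\<lambda>x. phi (zeta x, Z x, U x) * eta x) = integrable M (\<lambda>x. h x * eta x)"
    by (rule Bochner_Integration.integrable_cong) (simp_all add: h)
  then have i: "integrable M (\<lambda>x. phi (zeta x, Z x, U x) * eta x)" using int by simp
  have "(\<integral>x. h x * eta x \<partial>M) = (\<integral>x. phi (zeta x, Z x, U x) * eta x \<partial>M)"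
    by (rule Bochner_Integration.integral_cong) (simp_all add: h)
  also have "\<dots> = 0" by (rule ce_eta[OF m i])
  finally show ?thesis .
qed

definition RYf where "RYf x = Y x - bXY * X x - piY \<bullet> Z x"
definition RXf where "RXf x = X x - bYX * Y x - piX \<bullet> Z x"

lemma RY_eq: "x \<in> space M \<Longrightarrow> RYf x = xiY (U x) + zeta x"
  using eqs(1)[of x] unfolding RYf_def by simp
lemma RX_eq: "x \<in> space M \<Longrightarrow> RXf x = xiX (U x) + eta x"
  using eqs(2)[of x] unfolding RXf_def by simp

lemma innerZ_meas[measurable]: "(\<lambda>x. w \<bullet> Z x) \<in> borel_measurable M"
  by measurable

lemma R_meas[measurable]: "RYf \<in> borel_measurable M" "RXf \<in> borel_measurable M"
  unfolding RYf_def[abs_def] RXf_def[abs_def] by measurable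

lemma L2_inner: "integrable M (\<lambda>x. (w \<bullet> Z x)\<^sup>2)"
proof -
  have "integrable M (\<lambda>x. (\<Sum>i\<in>UNIV. w $ i * Z x $ i)\<^sup>2)"
    by (rule L2_sum) (auto intro: L2_scale ints)
  then show ?thesis by (simp add: inner_vec_def)
qed

lemma L2_lin3:
  fixes f g h :: "'a \<Rightarrow> real"
  assumes [measurable]: "f \<in> borel_measurable M" "g \<in> borel_measurable M" "h \<in> borel_measurable M"
    and "integrable M (\<lambda>x. (f x)\<^sup>2)" "integrable M (\<lambda>x. (g x)\<^sup>2)" "integrable M (\<lambda>x. (h x)\<^sup>2)"
  shows "integrable M (\<lambda>x. (f x + a * g x + b * h x)\<^sup>2)"
proof -
  have "integrable M (\<lambda>x. (f x + a * g x)\<^sup>2)"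
    by (rule L2_add) (use assms L2_scale in auto)
  then show ?thesis
    by (intro L2_add) (use assms L2_scale in auto)
qed

lemma L2_RY: "integrable M (\<lambda>x. (RYf x)\<^sup>2)"
  using L2_lin3[of Y X "\<lambda>x. piY \<bullet> Z x" "- bXY" "-1"] ints L2_inner
  unfolding RYf_def by simp

lemma L2_RX: "integrable M (\<lambda>x. (RXf x)\<^sup>2)"
  using L2_lin3[of X Y "\<lambda>x. piX \<bullet> Z x" "- bYX" "-1"] ints L2_inner
  unfolding RXf_def by simp

lemma L2_xiY: "integrable M (\<lambda>x. (xiY (U x))\<^sup>2)"
proof (rule L2_from_orth[OF _ _ _ L2_RY ints(5) ints(9) RY_eq])
  fix n
  show "(\<integral>x. clamp n (xiY (U x)) * zeta x \<partial>M) = 0"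
  proof -
    have cb: "\<And>x. \<bar>clamp n (xiY (U x))\<bar> \<le> real n" by (rule clamp_le)
    have i: "integrable M (\<lambda>x. clamp n (xiY (U x)) * zeta x)"
      by (rule int_bounded_mult[OF _ _ ints(9) cb]) measurable
    show ?thesis
      proof -
        have mphi: "(\<lambda>p. clamp n (xiY (snd (snd p)))) \<in> borel_measurable (borel \<Otimes>\<^sub>M (borel \<Otimes>\<^sub>M MU))" by measurable
        show ?thesis by (rule ce_zeta'[OF mphi _ i]) simp
      qed
  qed
qed measurable

lemma L2_xiX: "integrable M (\<lambda>x. (xiX (U x))\<^sup>2)"
proof (rule L2_from_orth[OF _ _ _ L2_RX ints(7) ints(10) RX_eq])
  fix n
  show "(\<integral>x. clamp n (xiX (U x)) * eta x \<partial>M) = 0"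
  proof -
    have cb: "\<And>x. \<bar>clamp n (xiX (U x))\<bar> \<le> real n" by (rule clamp_le)
    have i: "integrable M (\<lambda>x. clamp n (xiX (U x)) * eta x)"
      by (rule int_bounded_mult[OF _ _ ints(10) cb]) measurable
    show ?thesis
      proof -
        have mphi: "(\<lambda>p. clamp n (xiX (snd (snd p)))) \<in> borel_measurable (borel \<Otimes>\<^sub>M (borel \<Otimes>\<^sub>M MU))" by measurable
        show ?thesis by (rule ce_eta'[OF mphi _ i]) simp
      qed
  qed
qed measurable

lemma L2_zeta: "integrable M (\<lambda>x. (zeta x)\<^sup>2)"
proof -
  have "integrable M (\<lambda>x. (RYf x + (-1) * xiY (U x) + 0 * xiY (U x))\<^sup>2)"
    by (rule L2_lin3) (use L2_RY L2_xiY in auto)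
  moreover have "integrable M (\<lambda>x. (zeta x)\<^sup>2) = integrable M (\<lambda>x. (RYf x + (-1) * xiY (U x) + 0 * xiY (U x))\<^sup>2)"
    by (rule Bochner_Integration.integrable_cong) (auto simp: RY_eq)
  ultimately show ?thesis by simp
qed

lemma L2_eta: "integrable M (\<lambda>x. (eta x)\<^sup>2)"
proof -
  have "integrable M (\<lambda>x. (RXf x + (-1) * xiX (U x) + 0 * xiX (U x))\<^sup>2)"
    by (rule L2_lin3) (use L2_RX L2_xiX in auto)
  moreover have "integrable M (\<lambda>x. (eta x)\<^sup>2) = integrable M (\<lambda>x. (RXf x + (-1) * xiX (U x) + 0 * xiX (U x))\<^sup>2)"
    by (rule Bochner_Integration.integrable_cong) (auto simp: RX_eq)
  ultimately show ?thesis by simp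
qed


lemma orthY:
  fixes phi :: "real^'p \<Rightarrow> real"
  assumes [measurable]: "phi \<in> borel_measurable borel" and L2: "integrable M (\<lambda>x. (phi (Z x))\<^sup>2)"
  shows "(\<integral>x. phi (Z x) * RYf x \<partial>M) = 0"
proof -
  have i1: "integrable M (\<lambda>x. phi (Z x) * xiY (U x))"
    by (rule int_prod_L2[OF _ _ L2 L2_xiY]; measurable)
  have e1: "(\<integral>x. phi (Z x) * xiY (U x) \<partial>M) = 0"
  proof -
    have mZ: "(\<lambda>x. phi (Z x)) \<in> borel_measurable M" by measurable
    show ?thesis using indep_int(2)[OF assms(1) meas(7) L2_L1[OF mZ L2] ints(5)] ints(6) by simp
  qed
  have i2: "integrable M (\<lambda>x. phi (Z x) * zeta x)"
    by (rule int_prod_L2[OF _ _ L2 L2_zeta]; measurable)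
  have e2: "(\<integral>x. phi (Z x) * zeta x \<partial>M) = 0"
    proof -
      have mphi: "(\<lambda>p. phi (fst (snd p))) \<in> borel_measurable (borel \<Otimes>\<^sub>M (borel \<Otimes>\<^sub>M MU))" by measurable
      show ?thesis by (rule ce_zeta'[OF mphi _ i2]) simp
    qed
  have "(\<integral>x. phi (Z x) * RYf x \<partial>M) = (\<integral>x. phi (Z x) * xiY (U x) + phi (Z x) * zeta x \<partial>M)"
    by (rule Bochner_Integration.integral_cong) (auto simp: RY_eq distrib_left)
  also have "\<dots> = 0" using i1 i2 e1 e2 by simp
  finally show ?thesis .
qed

lemma orthX:
  fixes phi :: "real^'p \<Rightarrow> real"
  assumes [measurable]: "phi \<in> borel_measurable borel" and L2: "integrable M (\<lambda>x. (phi (Z x))\<^sup>2)"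
  shows "(\<integral>x. phi (Z x) * RXf x \<partial>M) = 0"
proof -
  have i1: "integrable M (\<lambda>x. phi (Z x) * xiX (U x))"
    by (rule int_prod_L2[OF _ _ L2 L2_xiX]; measurable)
  have e1: "(\<integral>x. phi (Z x) * xiX (U x) \<partial>M) = 0"
  proof -
    have mZ: "(\<lambda>x. phi (Z x)) \<in> borel_measurable M" by measurable
    show ?thesis using indep_int(2)[OF assms(1) meas(8) L2_L1[OF mZ L2] ints(7)] ints(8) by simp
  qed
  have i2: "integrable M (\<lambda>x. phi (Z x) * eta x)"
    by (rule int_prod_L2[OF _ _ L2 L2_eta]; measurable)
  have e2: "(\<integral>x. phi (Z x) * eta x \<partial>M) = 0"
    proof -
      have mphi: "(\<lambda>p. phi (fst (snd p))) \<in> borel_measurable (borel \<Otimes>\<^sub>M (borel \<Otimes>\<^sub>M MU))" by measurable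
      show ?thesis by (rule ce_eta'[OF mphi _ i2]) simp
    qed
  have "(\<integral>x. phi (Z x) * RXf x \<partial>M) = (\<integral>x. phi (Z x) * xiX (U x) + phi (Z x) * eta x \<partial>M)"
    by (rule Bochner_Integration.integral_cong) (auto simp: RX_eq distrib_left)
  also have "\<dots> = 0" using i1 i2 e1 e2 by simp
  finally show ?thesis .
qed

lemma G1:
  fixes f :: "real^'p \<Rightarrow> real"
  assumes [measurable]: "f \<in> borel_measurable borel" and fb: "\<And>z. \<bar>f z\<bar> \<le> B"
    and f0: "(\<integral>x. f (Z x) \<partial>M) = 0"
  shows "(\<integral>x. f (Z x) * (RXf x * RYf x) \<partial>M) = 0"
proof -
  have fbZ: "\<And>x. \<bar>f (Z x)\<bar> \<le> B" using fb by simp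
  have iF: "integrable M (\<lambda>x. f (Z x))"
    by (rule integrable_const_bound[where B=B], rule AE_I2, simp add: fb, measurable)
  have ixx: "integrable M (\<lambda>x. xiX (U x) * xiY (U x))"
    by (rule int_prod_L2[OF _ _ L2_xiX L2_xiY]; measurable)
  have mpsi: "(\<lambda>u. xiX u * xiY u) \<in> borel_measurable MU" by measurable
  have i1: "integrable M (\<lambda>x. f (Z x) * (xiX (U x) * xiY (U x)))"
    by (rule indep_int(1)[OF assms(1) mpsi iF ixx])
  have e1: "(\<integral>x. f (Z x) * (xiX (U x) * xiY (U x)) \<partial>M) = 0"
    using indep_int(2)[OF assms(1) mpsi iF ixx] f0 by simp
  have i2: "integrable M (\<lambda>x. f (Z x) * xiX (U x) * zeta x)"
    unfolding mult.assoc by (rule int_bounded_mult[OF _ _ int_prod_L2[OF _ _ L2_xiX L2_zeta] fbZ]; measurable)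
  have e2: "(\<integral>x. f (Z x) * xiX (U x) * zeta x \<partial>M) = 0"
    proof -
      have mphi: "(\<lambda>p. f (fst (snd p)) * xiX (snd (snd p))) \<in> borel_measurable (borel \<Otimes>\<^sub>M (borel \<Otimes>\<^sub>M MU))" by measurable
      show ?thesis by (rule ce_zeta'[OF mphi _ i2]) simp
    qed
  have i3: "integrable M (\<lambda>x. f (Z x) * xiY (U x) * eta x)"
    unfolding mult.assoc by (rule int_bounded_mult[OF _ _ int_prod_L2[OF _ _ L2_xiY L2_eta] fbZ]; measurable)
  have e3: "(\<integral>x. f (Z x) * xiY (U x) * eta x \<partial>M) = 0"
    proof -
      have mphi: "(\<lambda>p. f (fst (snd p)) * xiY (snd (snd p))) \<in> borel_measurable (borel \<Otimes>\<^sub>M (borel \<Otimes>\<^sub>M MU))" by measurable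
      show ?thesis by (rule ce_eta'[OF mphi _ i3]) simp
    qed
  have i4: "integrable M (\<lambda>x. f (Z x) * eta x * zeta x)"
    unfolding mult.assoc by (rule int_bounded_mult[OF _ _ int_prod_L2[OF _ _ L2_eta L2_zeta] fbZ]; measurable)
  have e4: "(\<integral>x. f (Z x) * eta x * zeta x \<partial>M) = 0"
    proof -
      have mphi: "(\<lambda>p. f (fst (snd p)) * fst p) \<in> borel_measurable (borel \<Otimes>\<^sub>M (borel \<Otimes>\<^sub>M MU))" by measurable
      show ?thesis by (rule ce_zeta'[OF mphi _ i4]) simp
    qed
  have pw: "\<And>F a b c d::real. F * ((a + b) * (c + d)) = F * (a * c) + F * a * d + F * c * b + F * b * d"
    by (simp add: algebra_simps)
  have "(\<integral>x. f (Z x) * (RXf x * RYf x) \<partial>M) =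
     (\<integral>x. f (Z x) * (xiX (U x) * xiY (U x)) + f (Z x) * xiX (U x) * zeta x
        + f (Z x) * xiY (U x) * eta x + f (Z x) * eta x * zeta x \<partial>M)"
    by (rule Bochner_Integration.integral_cong) (simp_all only: RX_eq RY_eq pw)
  also have "\<dots> = (\<integral>x. f (Z x) * (xiX (U x) * xiY (U x)) + f (Z x) * xiX (U x) * zeta x
        + f (Z x) * xiY (U x) * eta x \<partial>M) + (\<integral>x. f (Z x) * eta x * zeta x \<partial>M)"
    by (rule Bochner_Integration.integral_add[OF Bochner_Integration.integrable_add[OF Bochner_Integration.integrable_add[OF i1 i2] i3] i4])
  also have "(\<integral>x. f (Z x) * (xiX (U x) * xiY (U x)) + f (Z x) * xiX (U x) * zeta x
        + f (Z x) * xiY (U x) * eta x \<partial>M) = (\<integral>x. f (Z x) * (xiX (U x) * xiY (U x)) + f (Z x) * xiX (U x) * zeta x \<partial>M)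
        + (\<integral>x. f (Z x) * xiY (U x) * eta x \<partial>M)"
    by (rule Bochner_Integration.integral_add[OF Bochner_Integration.integrable_add[OF i1 i2] i3])
  also have "(\<integral>x. f (Z x) * (xiX (U x) * xiY (U x)) + f (Z x) * xiX (U x) * zeta x \<partial>M)
     = (\<integral>x. f (Z x) * (xiX (U x) * xiY (U x)) \<partial>M) + (\<integral>x. f (Z x) * xiX (U x) * zeta x \<partial>M)"
    by (rule Bochner_Integration.integral_add[OF i1 i2])
  also have "(\<integral>x. f (Z x) * (xiX (U x) * xiY (U x)) \<partial>M) + (\<integral>x. f (Z x) * xiX (U x) * zeta x \<partial>M)
     + (\<integral>x. f (Z x) * xiY (U x) * eta x \<partial>M) + (\<integral>x. f (Z x) * eta x * zeta x \<partial>M) = 0"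
    unfolding e1 e2 e3 e4 by simp
  finally show ?thesis .
qed


lemma Zinner: "(\<integral>x. Z x $ j * (w \<bullet> Z x) \<partial>M) = (second_moment M Z *v w) $ j"
proof -
  have ik: "integrable M (\<lambda>x. w $ k * (Z x $ j * Z x $ k))" for k
    by (rule integrable_mult_right, rule int_prod_L2[OF _ _ ints(3) ints(3)]; measurable)
  have "(\<integral>x. Z x $ j * (w \<bullet> Z x) \<partial>M) = (\<integral>x. (\<Sum>k\<in>UNIV. w $ k * (Z x $ j * Z x $ k)) \<partial>M)"
    by (rule Bochner_Integration.integral_cong) (simp_all add: inner_vec_def sum_distrib_left ac_simps)
  also have "\<dots> = (\<Sum>k\<in>UNIV. (\<integral>x. w $ k * (Z x $ j * Z x $ k) \<partial>M))"
    by (rule Bochner_Integration.integral_sum) (rule ik)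
  also have "\<dots> = (\<Sum>k\<in>UNIV. w $ k * (\<integral>x. Z x $ j * Z x $ k \<partial>M))"
    by simp
  also have "\<dots> = (second_moment M Z *v w) $ j"
    by (simp add: matrix_vector_mult_def second_moment_def ac_simps)
  finally show ?thesis .
qed

lemma iZ1: "integrable M (\<lambda>x. Z x $ j * X x)"
  by (rule int_prod_L2[OF _ _ ints(3) ints(1)]; measurable)
lemma iZ2: "integrable M (\<lambda>x. Z x $ j * Y x)"
  by (rule int_prod_L2[OF _ _ ints(3) ints(2)]; measurable)
lemma iZ3: "integrable M (\<lambda>x. Z x $ j * (w \<bullet> Z x))"
  by (rule int_prod_L2[OF _ _ ints(3) L2_inner]; measurable)
lemmas iZ = iZ1 iZ2 iZ3

lemma sY_eq: "(\<integral>x. Z x $ j * Y x \<partial>M) = bXY * (\<integral>x. Z x $ j * X x \<partial>M) + (second_moment M Z *v piY) $ j"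
proof -
  have "0 = (\<integral>x. Z x $ j * RYf x \<partial>M)"
    using orthY[of "\<lambda>z. z $ j"] ints(3) by simp
  also have "\<dots> = (\<integral>x. Z x $ j * Y x - bXY * (Z x $ j * X x) - Z x $ j * (piY \<bullet> Z x) \<partial>M)"
    by (rule Bochner_Integration.integral_cong) (simp_all add: RYf_def algebra_simps)
  also have "\<dots> = (\<integral>x. Z x $ j * Y x \<partial>M) - bXY * (\<integral>x. Z x $ j * X x \<partial>M) - (\<integral>x. Z x $ j * (piY \<bullet> Z x) \<partial>M)"
    using iZ by simp
  finally show ?thesis using Zinner[of j piY] by simp
qed

lemma sX_eq: "(\<integral>x. Z x $ j * X x \<partial>M) = bYX * (\<integral>x. Z x $ j * Y x \<partial>M) + (second_moment M Z *v piX) $ j"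
proof -
  have "0 = (\<integral>x. Z x $ j * RXf x \<partial>M)"
    using orthX[of "\<lambda>z. z $ j"] ints(3) by simp
  also have "\<dots> = (\<integral>x. Z x $ j * X x - bYX * (Z x $ j * Y x) - Z x $ j * (piX \<bullet> Z x) \<partial>M)"
    by (rule Bochner_Integration.integral_cong) (simp_all add: RXf_def algebra_simps)
  also have "\<dots> = (\<integral>x. Z x $ j * X x \<partial>M) - bYX * (\<integral>x. Z x $ j * Y x \<partial>M) - (\<integral>x. Z x $ j * (piX \<bullet> Z x) \<partial>M)"
    using iZ by simp
  finally show ?thesis using Zinner[of j piX] by simp
qed

lemma gX: "(second_moment M Z *v gammaX bXY bYX piY piX) $ j = (\<integral>x. Z x $ j * X x \<partial>M)"
proof -
  have D: "1 - bXY * bYX \<noteq> 0" using specs(3) by simp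
  have "(second_moment M Z *v gammaX bXY bYX piY piX) $ j =
     ((second_moment M Z *v piX) $ j + bYX * (second_moment M Z *v piY) $ j) / (1 - bXY * bYX)"
    by (simp add: gammaX_def matrix_vector_mult_scaleR matrix_vector_right_distrib divide_simps)
  also have "\<dots> = (\<integral>x. Z x $ j * X x \<partial>M)"
    by (rule lin_solve(1)[OF sX_eq[of j] sY_eq[of j] D])
  finally show ?thesis .
qed

lemma gY: "(second_moment M Z *v gammaY bXY bYX piY piX) $ j = (\<integral>x. Z x $ j * Y x \<partial>M)"
proof -
  have D: "1 - bXY * bYX \<noteq> 0" using specs(3) by simp
  have "(second_moment M Z *v gammaY bXY bYX piY piX) $ j =
     ((second_moment M Z *v piY) $ j + bXY * (second_moment M Z *v piX) $ j) / (1 - bXY * bYX)"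
    by (simp add: gammaY_def matrix_vector_mult_scaleR matrix_vector_right_distrib divide_simps)
  also have "\<dots> = (\<integral>x. Z x $ j * Y x \<partial>M)"
    by (rule lin_solve(2)[OF sX_eq[of j] sY_eq[of j] D])
  finally show ?thesis .
qed


lemma bprod:
  fixes f :: "real^'p \<Rightarrow> real" and P Q :: "'a \<Rightarrow> real"
  assumes [measurable]: "f \<in> borel_measurable borel" "P \<in> borel_measurable M" "Q \<in> borel_measurable M"
    and fb: "\<And>z. \<bar>f z\<bar> \<le> B"
    and "integrable M (\<lambda>x. (P x)\<^sup>2)" "integrable M (\<lambda>x. (Q x)\<^sup>2)"
  shows "integrable M (\<lambda>x. f (Z x) * (P x * Q x))"
proof -
  have fbZ: "\<And>x. \<bar>f (Z x)\<bar> \<le> B" using fb by simp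
  show ?thesis
    by (rule int_bounded_mult[OF _ _ int_prod_L2[OF _ _ assms(5,6)] fbZ]; measurable)
qed

lemma L2_bounded_inner:
  fixes f :: "real^'p \<Rightarrow> real"
  assumes [measurable]: "f \<in> borel_measurable borel" and fb: "\<And>z. \<bar>f z\<bar> \<le> B"
  shows "integrable M (\<lambda>x. (f (Z x) * (w \<bullet> Z x))\<^sup>2)"
proof -
  have i: "integrable M (\<lambda>x. B\<^sup>2 * (w \<bullet> Z x)\<^sup>2)" using L2_inner by simp
  have "AE x in M. norm ((f (Z x) * (w \<bullet> Z x))\<^sup>2) \<le> norm (B\<^sup>2 * (w \<bullet> Z x)\<^sup>2)"
  proof (rule AE_I2)
    fix x
    have "\<bar>f (Z x)\<bar>\<^sup>2 \<le> B\<^sup>2" using fb[of "Z x"] by (meson abs_ge_zero order_trans power_mono)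
    then have "(f (Z x))\<^sup>2 * (w \<bullet> Z x)\<^sup>2 \<le> B\<^sup>2 * (w \<bullet> Z x)\<^sup>2" by (intro mult_right_mono) auto
    then show "norm ((f (Z x) * (w \<bullet> Z x))\<^sup>2) \<le> norm (B\<^sup>2 * (w \<bullet> Z x)\<^sup>2)"
      by (simp add: power_mult_distrib)
  qed
  then show ?thesis by (intro Bochner_Integration.integrable_bound[OF i]) measurable
qed

lemma cov_zero:
  assumes H: "\<And>f B. f \<in> borel_measurable borel \<Longrightarrow> (\<And>z. \<bar>f z\<bar> \<le> B) \<Longrightarrow>
      (\<integral>x. f (Z x) \<partial>M) = 0 \<Longrightarrow> (\<integral>x. f (Z x) * (Y x * RYf x) \<partial>M) = 0"
  shows "cov_vec M (\<lambda>x. Y x * RY U xiY zeta x) Z = 0"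
proof -
  have W: "integrable M (\<lambda>x. Y x * RYf x)"
    by (rule int_prod_L2[OF _ _ ints(2) L2_RY]; measurable)
  have ZW0: "(\<integral>x. Z x $ j * (Y x * RYf x) \<partial>M) = 0" for j
  proof (cases "integrable M (\<lambda>x. Z x $ j * (Y x * RYf x))")
    case False then show ?thesis by (rule not_integrable_integral_eq)
  next
    case True
    define c where "c n = (\<integral>x. clamp n (Z x $ j) \<partial>M)" for n
    have icl: "integrable M (\<lambda>x. clamp n (Z x $ j))" for n
      by (rule integrable_const_bound[where B="real n"], rule AE_I2, simp add: clamp_le, measurable)
    have eq: "(\<integral>x. clamp n (Z x $ j) * (Y x * RYf x) \<partial>M) = c n * (\<integral>x. Y x * RYf x \<partial>M)" for n
    proof -
      have fm: "(\<lambda>z::real^'p. clamp n (z $ j) - c n) \<in> borel_measurable borel" by measurable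
      have fb: "\<bar>clamp n (z $ j) - c n\<bar> \<le> real n + \<bar>c n\<bar>" for z :: "real^'p"
        using clamp_le(1)[of n "z $ j"] by linarith
      have f0: "(\<integral>x. clamp n (Z x $ j) - c n \<partial>M) = 0"
        using icl[of n] by (simp add: c_def prob_space)
      have "0 = (\<integral>x. (clamp n (Z x $ j) - c n) * (Y x * RYf x) \<partial>M)"
        using H[OF fm fb f0] by simp
      also have "\<dots> = (\<integral>x. clamp n (Z x $ j) * (Y x * RYf x) - c n * (Y x * RYf x) \<partial>M)"
        by (simp add: left_diff_distrib)
      also have "\<dots> = (\<integral>x. clamp n (Z x $ j) * (Y x * RYf x) \<partial>M) - c n * (\<integral>x. Y x * RYf x \<partial>M)"
      proof -
        have i1: "integrable M (\<lambda>x. clamp n (Z x $ j) * (Y x * RYf x))"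
          by (rule int_bounded_mult[OF _ _ W clamp_le(1)]; measurable)
        show ?thesis using i1 W by simp
      qed
      finally show ?thesis by simp
    qed
    have L1: "(\<lambda>n. \<integral>x. clamp n (Z x $ j) * (Y x * RYf x) \<partial>M) \<longlonglongrightarrow> (\<integral>x. Z x $ j * (Y x * RYf x) \<partial>M)"
    proof (rule integral_dominated_convergence[where w="\<lambda>x. norm (Z x $ j * (Y x * RYf x))"])
      show "integrable M (\<lambda>x. norm (Z x $ j * (Y x * RYf x)))" using True by simp
      show "AE x in M. (\<lambda>n. clamp n (Z x $ j) * (Y x * RYf x)) \<longlonglongrightarrow> Z x $ j * (Y x * RYf x)"
        by (rule AE_I2, rule tendsto_mult, rule clamp_lim, rule tendsto_const)
      show "AE x in M. norm (clamp n (Z x $ j) * (Y x * RYf x)) \<le> norm (Z x $ j * (Y x * RYf x))" for n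
        by (rule AE_I2) (simp add: abs_mult mult_right_mono clamp_le(2))
    qed measurable
    have iZj: "integrable M (\<lambda>x. Z x $ j)"
      by (rule L2_L1[OF _ ints(3)]) measurable
    have L2: "c \<longlonglongrightarrow> (\<integral>x. Z x $ j \<partial>M)"
      unfolding c_def
    proof (rule integral_dominated_convergence[where w="\<lambda>x. norm (Z x $ j)"])
      show "integrable M (\<lambda>x. norm (Z x $ j))" using iZj by simp
      show "AE x in M. (\<lambda>n. clamp n (Z x $ j)) \<longlonglongrightarrow> Z x $ j"
        by (rule AE_I2, rule clamp_lim)
      show "AE x in M. norm (clamp n (Z x $ j)) \<le> norm (Z x $ j)" for n
        by (rule AE_I2) (simp add: clamp_le(2))
    qed measurable
    then have "(\<lambda>n. c n * (\<integral>x. Y x * RYf x \<partial>M)) \<longlonglongrightarrow> 0 * (\<integral>x. Y x * RYf x \<partial>M)"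
      using ints(4)[of j] by (intro tendsto_mult tendsto_const) simp
    then have "(\<lambda>n. \<integral>x. clamp n (Z x $ j) * (Y x * RYf x) \<partial>M) \<longlonglongrightarrow> 0"
      unfolding eq by simp
    from LIMSEQ_unique[OF L1 this] show ?thesis .
  qed
  show ?thesis
    unfolding vec_eq_iff
  proof
    fix j
    have "cov M (\<lambda>x. Y x * RY U xiY zeta x) (\<lambda>x. Z x $ j) = (\<integral>x. Y x * RY U xiY zeta x * Z x $ j \<partial>M)"
      unfolding cov_def using ints(4)[of j] by simp
    also have "\<dots> = (\<integral>x. Z x $ j * (Y x * RYf x) \<partial>M)"
      by (rule Bochner_Integration.integral_cong) (simp_all add: RY_def RY_eq)
    also have "\<dots> = 0" by (rule ZW0)
    finally show "cov_vec M (\<lambda>x. Y x * RY U xiY zeta x) Z $ j = 0 $ j"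
      unfolding cov_vec_def by simp
  qed
qed

end


lemma gam_rel:
  assumes "1 - a * b \<noteq> (0::real)"
  shows "gammaY a b pY pX = a *\<^sub>R gammaX a b pY pX + pY"
    "gammaX a b pY pX = b *\<^sub>R gammaY a b pY pX + pX"
proof -
  have divD: "x / D = y / D + z" if "D \<noteq> 0" "x = y + z * D" for x y z D :: real
    using that by (simp add: field_simps)
  have gXn: "gammaX a b pY pX $ i = (pX $ i + b * pY $ i) / (1 - a * b)" for i
    by (simp add: gammaX_def divide_inverse ac_simps)
  have gYn: "gammaY a b pY pX $ i = (pY $ i + a * pX $ i) / (1 - a * b)" for i
    by (simp add: gammaY_def divide_inverse ac_simps)
  show "gammaY a b pY pX = a *\<^sub>R gammaX a b pY pX + pY"
    unfolding vec_eq_iff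
  proof
    fix i
    have "(pY $ i + a * pX $ i) / (1 - a * b) = (a * (pX $ i + b * pY $ i)) / (1 - a * b) + pY $ i"
      by (rule divD[OF assms]) (simp add: algebra_simps)
    then show "gammaY a b pY pX $ i = (a *\<^sub>R gammaX a b pY pX + pY) $ i"
      by (simp add: gXn gYn)
  qed
  show "gammaX a b pY pX = b *\<^sub>R gammaY a b pY pX + pX"
    unfolding vec_eq_iff
  proof
    fix i
    have "(pX $ i + b * pY $ i) / (1 - a * b) = (b * (pY $ i + a * pX $ i)) / (1 - a * b) + pX $ i"
      by (rule divD[OF assms]) (simp add: algebra_simps)
    then show "gammaX a b pY pX $ i = (b *\<^sub>R gammaY a b pY pX + pX) $ i"
      by (simp add: gXn gYn)
  qed
qed

definition cnt :: "real^'p \<Rightarrow> real^'p \<Rightarrow> real \<Rightarrow> nat" where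
  "cnt gX gY c = card {j. gX $ j \<noteq> 0 \<and> gY $ j / gX $ j = c}"

lemma plur_mode:
  fixes pY pX :: "real^'p"
  assumes pl: "plurality_XY a b pY pX" and D: "1 - a * b \<noteq> 0" and c: "c \<noteq> a"
  shows "cnt (gammaX a b pY pX) (gammaY a b pY pX) c < cnt (gammaX a b pY pX) (gammaY a b pY pX) a"
proof -
  define gX where "gX = gammaX a b pY pX"
  define gY where "gY = gammaY a b pY pX"
  have gY: "gY $ j = a * gX $ j + pY $ j" for j
    using gam_rel(1)[OF D, of pY pX] unfolding gX_def gY_def by (simp add: vec_eq_iff)
  have gX0: "pY $ j = 0 \<Longrightarrow> gX $ j = pX $ j / (1 - a * b)" for j
    unfolding gX_def gammaX_def by simp
  have V: "{j. gX $ j \<noteq> 0 \<and> gY $ j / gX $ j = a} = validXY pY pX"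
  proof (intro set_eqI iffI)
    fix j assume "j \<in> {j. gX $ j \<noteq> 0 \<and> gY $ j / gX $ j = a}"
    then have h: "gX $ j \<noteq> 0" "(a * gX $ j + pY $ j) / gX $ j = a" using gY by auto
    then have "pY $ j = 0" by (simp add: field_simps)
    then show "j \<in> validXY pY pX" using h(1) gX0 unfolding validXY_def by auto
  next
    fix j assume "j \<in> validXY pY pX"
    then have h: "pX $ j \<noteq> 0" "pY $ j = 0" unfolding validXY_def by auto
    then have "gX $ j \<noteq> 0" using gX0 D by simp
    then show "j \<in> {j. gX $ j \<noteq> 0 \<and> gY $ j / gX $ j = a}" using gY h by simp
  qed
  define F where "F = (\<lambda>c. card {j \<in> invalidXY a b pY pX. pY $ j / gammaX a b pY pX $ j = c})"
  have sub: "{j. gX $ j \<noteq> 0 \<and> gY $ j / gX $ j = c} \<subseteq> {j \<in> invalidXY a b pY pX. pY $ j / gammaX a b pY pX $ j = c - a}"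
  proof
    fix j assume "j \<in> {j. gX $ j \<noteq> 0 \<and> gY $ j / gX $ j = c}"
    then have h: "gX $ j \<noteq> 0" "(a * gX $ j + pY $ j) / gX $ j = c" using gY by auto
    then have r: "pY $ j / gX $ j = c - a" by (simp add: field_simps)
    then have "pY $ j \<noteq> 0" using c by auto
    then show "j \<in> {j \<in> invalidXY a b pY pX. pY $ j / gammaX a b pY pX $ j = c - a}"
      using h(1) r unfolding invalidXY_def gX_def by auto
  qed
  have "cnt gX gY c \<le> F (c - a)"
    unfolding cnt_def F_def by (rule card_mono[OF finite sub])
  also have "\<dots> \<le> Max (F ` UNIV)"
  proof (rule Max_ge)
    have "F ` UNIV \<subseteq> {..CARD('p)}"
      unfolding F_def by (auto intro: card_mono)
    then show "finite (F ` UNIV)" using finite_subset by blast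
  qed auto
  also have "\<dots> < card (validXY pY pX)"
    using pl unfolding plurality_XY_def F_def by simp
  also have "\<dots> = cnt gX gY a" unfolding cnt_def V ..
  finally show ?thesis unfolding gX_def gY_def .
qed

lemma transfer:
  fixes X Y :: "'a \<Rightarrow> real" and Z :: "'a \<Rightarrow> real^'p" and X' Y' :: "'b \<Rightarrow> real" and Z' :: "'b \<Rightarrow> real^'p"
    and g :: "real \<times> real \<times> (real^'p) \<Rightarrow> real"
  assumes [measurable]: "X \<in> borel_measurable M" "Y \<in> borel_measurable M" "Z \<in> borel_measurable M"
    "X' \<in> borel_measurable M'" "Y' \<in> borel_measurable M'" "Z' \<in> borel_measurable M'"
    and law: "distr M borel (\<lambda>x. (X x, Y x, Z x)) = distr M' borel (\<lambda>x. (X' x, Y' x, Z' x))"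
    and g[measurable]: "g \<in> borel_measurable borel"
  shows "(\<integral>x. g (X x, Y x, Z x) \<partial>M) = (\<integral>x. g (X' x, Y' x, Z' x) \<partial>M')"
proof -
  have m1: "(\<lambda>x. (X x, Y x, Z x)) \<in> measurable M borel" by measurable
  have m2: "(\<lambda>x. (X' x, Y' x, Z' x)) \<in> measurable M' borel" by measurable
  have "(\<integral>x. g (X x, Y x, Z x) \<partial>M) = integral\<^sup>L (distr M borel (\<lambda>x. (X x, Y x, Z x))) g"
    by (rule integral_distr[OF m1 g, symmetric])
  also have "\<dots> = integral\<^sup>L (distr M' borel (\<lambda>x. (X' x, Y' x, Z' x))) g" unfolding law ..
  also have "\<dots> = (\<integral>x. g (X' x, Y' x, Z' x) \<partial>M')"
    by (rule integral_distr[OF m2 g])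
  finally show ?thesis .
qed


lemma m_fst[measurable]: "(\<lambda>t::real \<times> real \<times> (real^'p). fst t) \<in> borel_measurable borel"
  by (rule borel_measurable_continuous_onI) (intro continuous_intros)
lemma m_fsnd[measurable]: "(\<lambda>t::real \<times> real \<times> (real^'p). fst (snd t)) \<in> borel_measurable borel"
  by (rule borel_measurable_continuous_onI) (intro continuous_intros)
lemma m_ssnd[measurable]: "(\<lambda>t::real \<times> real \<times> (real^'p). snd (snd t)) \<in> borel_measurable borel"
  by (rule borel_measurable_continuous_onI) (intro continuous_intros)

lemma alg_split:
  fixes d rx rx2 y w F r :: real
  assumes "d \<noteq> 0" "rx - rx2 = d * y - d * w"
  shows "F * (y * r) = (F * (rx * r) - F * (rx2 * r)) / d + F * (w * r)"
proof -
  have "F * (rx * r) - F * (rx2 * r) = F * r * (rx - rx2)" by (simp add: algebra_simps)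
  also have "\<dots> = d * (F * (y * r) - F * (w * r))" unfolding assms(2) by (simp add: algebra_simps)
  finally show ?thesis using assms(1) by simp
qed

theorem lemma1:
  fixes M :: "'a measure" and X Y :: "'a \<Rightarrow> real" and Z :: "'a \<Rightarrow> real^'p"
    and U :: "'a \<Rightarrow> 'u" and MU :: "'u measure" and xiY xiX :: "'u \<Rightarrow> real"
    and zeta eta :: "'a \<Rightarrow> real" and bXY bYX :: real and piY piX :: "real^'p"
    and M' :: "'b measure" and X' Y' :: "'b \<Rightarrow> real" and Z' :: "'b \<Rightarrow> real^'p"
    and U' :: "'b \<Rightarrow> 'v" and MU' :: "'v measure" and xiY' xiX' :: "'v \<Rightarrow> real"
    and zeta' eta' :: "'b \<Rightarrow> real" and bXY' bYX' :: real and piY' piX' :: "real^'p"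
  assumes model: "lin_sem M X Y Z U MU xiY xiX zeta eta bXY bYX piY piX"
    and plur: "plurality_XY bXY bYX piY piX"
    and cov: "cov_vec M (\<lambda>x. Y x * RY U xiY zeta x) Z \<noteq> 0"
    and model': "lin_sem M' X' Y' Z' U' MU' xiY' xiX' zeta' eta' bXY' bYX' piY' piX'"
    and plur': "plurality_XY bXY' bYX' piY' piX'"
    and cov': "cov_vec M' (\<lambda>x. Y' x * RY U' xiY' zeta' x) Z' \<noteq> 0"
    and same_law: "distr M borel (\<lambda>x. (X x, Y x, Z x)) = distr M' borel (\<lambda>x. (X' x, Y' x, Z' x))"
  shows "bXY = bXY' \<and> bYX = bYX'"
proof -
  interpret m1: lsem M X Y Z U MU xiY xiX zeta eta bXY bYX piY piX
    by unfold_locales (rule model)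
  interpret m2: lsem M' X' Y' Z' U' MU' xiY' xiX' zeta' eta' bXY' bYX' piY' piX'
    by unfold_locales (rule model')
  have T: "(\<integral>x. g (X x, Y x, Z x) \<partial>M) = (\<integral>x. g (X' x, Y' x, Z' x) \<partial>M')"
    if "g \<in> borel_measurable borel" for g :: "real \<times> real \<times> (real^'p) \<Rightarrow> real"
    by (rule transfer[OF m1.meas(1,2,3) m2.meas(1,2,3) same_law that])
  have Szz: "(\<integral>x. Z x $ j * Z x $ k \<partial>M) = (\<integral>x. Z' x $ j * Z' x $ k \<partial>M')" for j k
  proof -
    have gm: "(\<lambda>t::real \<times> real \<times> (real^'p). snd (snd t) $ j * snd (snd t) $ k) \<in> borel_measurable borel"
      by measurable
    show ?thesis using T[OF gm] by simp
  qed
  have Seq: "second_moment M Z = second_moment M' Z'"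
    unfolding second_moment_def Szz ..
  have sX: "(\<integral>x. Z x $ j * X x \<partial>M) = (\<integral>x. Z' x $ j * X' x \<partial>M')" for j
  proof -
    have gm: "(\<lambda>t::real \<times> real \<times> (real^'p). snd (snd t) $ j * fst t) \<in> borel_measurable borel"
      by measurable
    show ?thesis using T[OF gm] by simp
  qed
  have sY: "(\<integral>x. Z x $ j * Y x \<partial>M) = (\<integral>x. Z' x $ j * Y' x \<partial>M')" for j
  proof -
    have gm: "(\<lambda>t::real \<times> real \<times> (real^'p). snd (snd t) $ j * fst (snd t)) \<in> borel_measurable borel"
      by measurable
    show ?thesis using T[OF gm] by simp
  qed
  have D1: "1 - bXY * bYX \<noteq> 0" using m1.specs(3) by simp
  have D2: "1 - bXY' * bYX' \<noteq> 0" using m2.specs(3) by simp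
  have gXe: "gammaX bXY bYX piY piX = gammaX bXY' bYX' piY' piX'"
  proof (rule inv_injective[OF m1.ints(11)])
    show "second_moment M Z *v gammaX bXY bYX piY piX = second_moment M Z *v gammaX bXY' bYX' piY' piX'"
      unfolding vec_eq_iff
    proof
      fix j
      have "(second_moment M Z *v gammaX bXY bYX piY piX) $ j = (\<integral>x. Z x $ j * X x \<partial>M)" by (rule m1.gX)
      also have "\<dots> = (\<integral>x. Z' x $ j * X' x \<partial>M')" by (rule sX)
      also have "\<dots> = (second_moment M' Z' *v gammaX bXY' bYX' piY' piX') $ j" by (rule m2.gX[symmetric])
      also have "\<dots> = (second_moment M Z *v gammaX bXY' bYX' piY' piX') $ j" unfolding Seq ..
      finally show "(second_moment M Z *v gammaX bXY bYX piY piX) $ j = (second_moment M Z *v gammaX bXY' bYX' piY' piX') $ j" .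
    qed
  qed
  have gYe: "gammaY bXY bYX piY piX = gammaY bXY' bYX' piY' piX'"
  proof (rule inv_injective[OF m1.ints(11)])
    show "second_moment M Z *v gammaY bXY bYX piY piX = second_moment M Z *v gammaY bXY' bYX' piY' piX'"
      unfolding vec_eq_iff
    proof
      fix j
      have "(second_moment M Z *v gammaY bXY bYX piY piX) $ j = (\<integral>x. Z x $ j * Y x \<partial>M)" by (rule m1.gY)
      also have "\<dots> = (\<integral>x. Z' x $ j * Y' x \<partial>M')" by (rule sY)
      also have "\<dots> = (second_moment M' Z' *v gammaY bXY' bYX' piY' piX') $ j" by (rule m2.gY[symmetric])
      also have "\<dots> = (second_moment M Z *v gammaY bXY' bYX' piY' piX') $ j" unfolding Seq ..
      finally show "(second_moment M Z *v gammaY bXY bYX piY piX) $ j = (second_moment M Z *v gammaY bXY' bYX' piY' piX') $ j" .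
    qed
  qed
  define gX where "gX = gammaX bXY bYX piY piX"
  define gY where "gY = gammaY bXY bYX piY piX"
  have bXYe: "bXY = bXY'"
  proof (rule ccontr)
    assume ne: "bXY \<noteq> bXY'"
    have 1: "cnt gX gY bXY' < cnt gX gY bXY"
      unfolding gX_def gY_def by (rule plur_mode[OF plur D1]) (use ne in auto)
    have 2: "cnt gX gY bXY < cnt gX gY bXY'"
      unfolding gX_def gY_def gXe gYe by (rule plur_mode[OF plur' D2]) (use ne in auto)
    from 1 2 show False by simp
  qed
  have h1: "gY = bXY *\<^sub>R gX + piY" unfolding gX_def gY_def by (rule gam_rel(1)[OF D1])
  have h2': "gammaY bXY' bYX' piY' piX' = bXY' *\<^sub>R gammaX bXY' bYX' piY' piX' + piY'" by (rule gam_rel(1)[OF D2])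
  have h2: "gY = bXY *\<^sub>R gX + piY'" unfolding gX_def gY_def gXe gYe using h2' bXYe by simp
  have piYe: "piY = piY'" using h1 h2 by simp
  have h3: "gX = bYX *\<^sub>R gY + piX" unfolding gX_def gY_def by (rule gam_rel(2)[OF D1])
  have h4: "gX = bYX' *\<^sub>R gY + piX'" unfolding gX_def gY_def gXe gYe by (rule gam_rel(2)[OF D2])
  have bYXe: "bYX = bYX'"
  proof (rule ccontr)
    assume ne: "bYX \<noteq> bYX'"
    define d where "d = bYX' - bYX"
    have d0: "d \<noteq> 0" using ne unfolding d_def by simp
    have eqv: "bYX *\<^sub>R gY + piX = bYX' *\<^sub>R gY + piX'" using h3 h4 by (rule subst)
    have piXd: "piX' = piX - d *\<^sub>R gY"
      unfolding vec_eq_iff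
    proof
      fix i
      have c: "bYX * gY $ i + piX $ i = bYX' * gY $ i + piX' $ i"
        using arg_cong[OF eqv, of "\<lambda>v. v $ i"] by simp
      show "piX' $ i = (piX - d *\<^sub>R gY) $ i"
        using c by (simp add: d_def algebra_simps)
    qed
    define RX2 where "RX2 x = X x - bYX' * Y x - piX' \<bullet> Z x" for x
    have RX2m[measurable]: "RX2 \<in> borel_measurable M" unfolding RX2_def[abs_def] by measurable
    have L2RX2: "integrable M (\<lambda>x. (RX2 x)\<^sup>2)"
      using m1.L2_lin3[of X Y "\<lambda>x. piX' \<bullet> Z x" "- bYX'" "-1"] m1.ints m1.L2_inner
      unfolding RX2_def by simp
    have diff: "m1.RXf x - RX2 x = d * Y x - d * (gY \<bullet> Z x)" for x
      unfolding m1.RXf_def RX2_def piXd d_def by (simp add: inner_diff_left algebra_simps)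
    have H: "(\<integral>x. f (Z x) * (Y x * m1.RYf x) \<partial>M) = 0"
      if fm[measurable]: "f \<in> borel_measurable borel" and fb: "\<And>z. \<bar>f z\<bar> \<le> B"
        and f0: "(\<integral>x. f (Z x) \<partial>M) = 0" for f B
    proof -
      have gm0: "(\<lambda>t::real \<times> real \<times> (real^'p). f (snd (snd t))) \<in> borel_measurable borel" by measurable
      have f0': "(\<integral>x. f (Z' x) \<partial>M') = 0" using T[OF gm0] f0 by simp
      have E2': "(\<integral>x. f (Z' x) * (m2.RXf x * m2.RYf x) \<partial>M') = 0" by (rule m2.G1[OF fm fb f0'])
      have gm2: "(\<lambda>t::real \<times> real \<times> (real^'p). f (snd (snd t)) * ((fst t - bYX' * fst (snd t) - piX' \<bullet> snd (snd t))
          * (fst (snd t) - bXY' * fst t - piY' \<bullet> snd (snd t)))) \<in> borel_measurable borel" by measurable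
      have E2a: "(\<integral>x. f (Z x) * ((X x - bYX' * Y x - piX' \<bullet> Z x) * (Y x - bXY' * X x - piY' \<bullet> Z x)) \<partial>M)
          = (\<integral>x. f (Z' x) * ((X' x - bYX' * Y' x - piX' \<bullet> Z' x) * (Y' x - bXY' * X' x - piY' \<bullet> Z' x)) \<partial>M')"
        using T[OF gm2] by (simp only: fst_conv snd_conv)
      have E2b: "(\<integral>x. f (Z' x) * ((X' x - bYX' * Y' x - piX' \<bullet> Z' x) * (Y' x - bXY' * X' x - piY' \<bullet> Z' x)) \<partial>M') = 0"
        using E2' unfolding m2.RXf_def m2.RYf_def .
      have E2: "(\<integral>x. f (Z x) * (RX2 x * m1.RYf x) \<partial>M) = 0"
        unfolding RX2_def m1.RYf_def unfolding bXYe piYe by (subst E2a) (rule E2b)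
      have E1: "(\<integral>x. f (Z x) * (m1.RXf x * m1.RYf x) \<partial>M) = 0" by (rule m1.G1[OF fm fb f0])
      have fgm: "(\<lambda>z. f z * (gY \<bullet> z)) \<in> borel_measurable borel" by measurable
      have E3: "(\<integral>x. f (Z x) * ((gY \<bullet> Z x) * m1.RYf x) \<partial>M) = 0"
        using m1.orthY[OF fgm m1.L2_bounded_inner[OF fm fb]] by (simp add: mult.assoc)
      have iA: "integrable M (\<lambda>x. f (Z x) * (m1.RXf x * m1.RYf x))"
        by (rule m1.bprod[OF fm _ _ fb m1.L2_RX m1.L2_RY]) measurable
      have iB: "integrable M (\<lambda>x. f (Z x) * (RX2 x * m1.RYf x))"
        by (rule m1.bprod[OF fm _ _ fb L2RX2 m1.L2_RY]) measurable
      have iC: "integrable M (\<lambda>x. f (Z x) * ((gY \<bullet> Z x) * m1.RYf x))"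
        by (rule m1.bprod[OF fm _ _ fb m1.L2_inner m1.L2_RY]) measurable
      have "(\<integral>x. f (Z x) * (Y x * m1.RYf x) \<partial>M) =
          (\<integral>x. (f (Z x) * (m1.RXf x * m1.RYf x) - f (Z x) * (RX2 x * m1.RYf x)) / d
             + f (Z x) * ((gY \<bullet> Z x) * m1.RYf x) \<partial>M)"
        by (rule Bochner_Integration.integral_cong[OF refl alg_split[OF d0 diff]])
      also have "\<dots> = ((\<integral>x. f (Z x) * (m1.RXf x * m1.RYf x) \<partial>M) - (\<integral>x. f (Z x) * (RX2 x * m1.RYf x) \<partial>M)) / d
             + (\<integral>x. f (Z x) * ((gY \<bullet> Z x) * m1.RYf x) \<partial>M)"
        using iA iB iC by simp
      also have "\<dots> = 0" unfolding E1 E2 E3 by simp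
      finally show ?thesis .
    qed
    have "cov_vec M (\<lambda>x. Y x * RY U xiY zeta x) Z = 0"
      by (rule m1.cov_zero) (rule H)
    then show False using cov by simp
  qed
  show ?thesis using bXYe bYXe by simp
qed

end
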